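(* Let $c<d$ be positive integers and let $X_{c,d}\subset\mathbb{P}^5$ be the threefold defined over $\overline{\mathbb{Q}}$ by $$x_0^c+x_1^c+x_2^c-x_3^c-x_4^c-x_5^c=0,\qquad x_0^d+x_1^d+x_2^d-x_3^d-x_4^d-x_5^d=0.$$ Then the singular locus of $X_{c,d}$ is finite. More precisely, if $[\xi_0,\dots,\xi_5]$ is a singular point of $X_{c,d}$ and $\xi_i,\xi_j$ are two non-zero coordinates, then $\xi_i^{2(d-c)}=\xi_j^{2(d-c)}$. *)

theory Defs
  imports Complex_Main "HOL-Computational_Algebra.Polynomial"
begin

text \<open>Points of P^5 over the algebraic closure of Q are represented by their
homogeneous coordinate vectors x 0, ..., x 5 (a function nat => complex, only
indices below 6 matter), all of whose coordinates are algebraic numbers, not all zero.\<close>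

definition sgn6 :: "nat \<Rightarrow> complex" where
  "sgn6 i = (if i < 3 then 1 else -1)"

definition Fk :: "nat \<Rightarrow> (nat \<Rightarrow> complex) \<Rightarrow> complex" where
  "Fk k x = (\<Sum>i<6. sgn6 i * x i ^ k)"

definition dFk :: "nat \<Rightarrow> (nat \<Rightarrow> complex) \<Rightarrow> nat \<Rightarrow> complex" where
  "dFk k x i = of_nat k * sgn6 i * x i ^ (k - 1)"

definition qbar_proj_point :: "(nat \<Rightarrow> complex) \<Rightarrow> bool" where
  "qbar_proj_point x \<longleftrightarrow> (\<exists>i<6. x i \<noteq> 0) \<and> (\<forall>i<6. algebraic (x i))"

definition on_X :: "nat \<Rightarrow> nat \<Rightarrow> (nat \<Rightarrow> complex) \<Rightarrow> bool" where
  "on_X c d x \<longleftrightarrow> qbar_proj_point x \<and> Fk c x = 0 \<and> Fk d x = 0"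

text \<open>Singular point of the (codimension 2 complete intersection) X_{c,d}:
a point of X where the 2x6 Jacobian matrix has rank < 2, i.e. all 2x2 minors vanish.\<close>
definition singular_X :: "nat \<Rightarrow> nat \<Rightarrow> (nat \<Rightarrow> complex) \<Rightarrow> bool" where
  "singular_X c d x \<longleftrightarrow> on_X c d x \<and>
     (\<forall>i<6. \<forall>j<6. dFk c x i * dFk d x j - dFk c x j * dFk d x i = 0)"

definition proj_eq :: "(nat \<Rightarrow> complex) \<Rightarrow> (nat \<Rightarrow> complex) \<Rightarrow> bool" where
  "proj_eq x y \<longleftrightarrow> (\<exists>l. l \<noteq> 0 \<and> (\<forall>i<6. y i = l * x i))"

end

theory Submission
  imports Defs
begin

lemma key:
  fixes c d :: nat
  assumes "0 < c" "c < d" "singular_X c d x" "i < 6" "j < 6" "x i \<noteq> 0" "x j \<noteq> 0"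
  shows "x i ^ (d - c) = x j ^ (d - c)"
proof -
  have m: "dFk c x i * dFk d x j - dFk c x j * dFk d x i = 0"
    using assms(3-5) unfolding singular_X_def by blast
  have s: "sgn6 i \<noteq> 0" "sgn6 j \<noteq> 0" by (auto simp: sgn6_def)
  have dd: "d - 1 = (c - 1) + (d - c)" using assms(1,2) by simp
  have e: "dFk c x i * dFk d x j - dFk c x j * dFk d x i =
     of_nat c * of_nat d * sgn6 i * sgn6 j * (x i ^ (c-1) * x j ^ (c-1)) * (x j ^ (d - c) - x i ^ (d-c))"
    unfolding dFk_def dd power_add by (simp only: algebra_simps)
  have "of_nat c * of_nat d * sgn6 i * sgn6 j * (x i ^ (c-1) * x j ^ (c-1)) * (x j ^ (d - c) - x i ^ (d-c)) = 0"
    using m e by simp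
  then show ?thesis using s assms by auto
qed

theorem mainTheorem4:
  fixes c d :: nat
  assumes "0 < c" and "c < d"
  shows "(\<exists>S. finite S \<and> (\<forall>x. singular_X c d x \<longrightarrow> (\<exists>y\<in>S. proj_eq y x)))
       \<and> (\<forall>x. singular_X c d x \<longrightarrow>
            (\<forall>i<6. \<forall>j<6. x i \<noteq> 0 \<longrightarrow> x j \<noteq> 0 \<longrightarrow>
               x i ^ (2 * (d - c)) = x j ^ (2 * (d - c))))"
proof
  define R where "R = insert (0::complex) {z. z ^ (d - c) = 1}"
  have fR: "finite R" unfolding R_def using assms
    by (simp add: finite_roots_unity)
  define S where "S = {f::nat\<Rightarrow>complex. \<forall>i. (i \<in> {..<6} \<longrightarrow> f i \<in> R) \<and> (i \<notin> {..<6} \<longrightarrow> f i = 0)}"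
  have fS: "finite S" unfolding S_def by (rule finite_set_of_finite_funs) (use fR in auto)
  show "\<exists>S. finite S \<and> (\<forall>x. singular_X c d x \<longrightarrow> (\<exists>y\<in>S. proj_eq y x))"
  proof (intro exI conjI allI impI)
    show "finite S" by (rule fS)
    fix x assume sx: "singular_X c d x"
    then obtain k where k: "k < 6" "x k \<noteq> 0"
      unfolding singular_X_def on_X_def qbar_proj_point_def by blast
    define y where "y i = (if i < 6 then x i / x k else 0)" for i
    have "y \<in> S" unfolding S_def
    proof (intro CollectI allI conjI impI)
      fix i :: nat assume "i \<in> {..<6}"
      hence i: "i < 6" by simp
      show "y i \<in> R"
      proof (cases "x i = 0")
        case True thus ?thesis by (simp add: y_def R_def)
      next
        case False
        have "x i ^ (d - c) = x k ^ (d - c)" using key[OF assms sx i k(1) False k(2)] .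
        thus ?thesis using i k by (simp add: y_def R_def power_divide)
      qed
    qed (simp add: y_def)
    moreover have "proj_eq y x" unfolding proj_eq_def
      by (rule exI[of _ "x k"]) (use k in \<open>simp add: y_def\<close>)
    ultimately show "\<exists>y\<in>S. proj_eq y x" by blast
  qed
next
  show "\<forall>x. singular_X c d x \<longrightarrow>
            (\<forall>i<6. \<forall>j<6. x i \<noteq> 0 \<longrightarrow> x j \<noteq> 0 \<longrightarrow>
               x i ^ (2 * (d - c)) = x j ^ (2 * (d - c)))"
  proof (intro allI impI)
    fix x i j assume "singular_X c d x" "i < (6::nat)" "j < (6::nat)" "x i \<noteq> 0" "x j \<noteq> 0"
    hence "x i ^ (d - c) = x j ^ (d - c)" using key[OF assms] by blast
    thus "x i ^ (2 * (d - c)) = x j ^ (2 * (d - c))" by (simp only: power_mult_distrib mult.commute[of 2] power_mult)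
  qed
qed

end
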